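(* Let $\eta,\lambda>0$ with $\eta\lambda\le\tfrac12$, $T\ge1$, $\delta\in(0,1)$, assume $\frac{\underline\sigma^2}{M^2}\ge3e^{4\eta\lambda}\sqrt{\lambda\eta\ln\frac{2T^2}{\delta}}$, and let $x(t)$ be the SGD+WD iterates from $x(0)\neq0$. On the event $\mathcal E_T$, for every $0\le t\le T$, $$\eta^{-2}\|x(t)\|_2^4\ge\frac{1-\eta\lambda}{2\eta\lambda}\big(1-e^{-4t\eta\lambda(1-\eta\lambda)}\big)\underline\sigma^2-\frac12(1-\eta\lambda)^2M^2e^{4\eta\lambda}\sqrt{\frac{1}{\lambda\eta}\ln\frac{2T^2}{\delta}}.$$ If in addition $\frac{\underline\sigma^2}{12\eta\lambda}\ge\frac{M^2}{2}e^{4\eta\lambda}\sqrt{\frac{1}{\lambda\eta}\ln\frac{2T^2}{\delta}}$, then on $\mathcal E_T$, for every $t$ with $\frac{1}{\eta\lambda}\le t\le T$, $$\eta^{-2}\|x(t)\|_2^4\ge\frac{(1-\eta\lambda)^2\underline\sigma^2}{4\eta\lambda}.$$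
   Context: Let $\Gamma$ be an index set with probability distribution $\mathcal D$; each $L_\gamma:\mathbb{R}^d\setminus\{0\}\to\mathbb{R}$ is differentiable and scale invariant ($L_\gamma(cx)=L_\gamma(x)$ for $c>0$); $M:=\sup_{\gamma}\max_{\|x\|_2=1}\|\nabla L_\gamma(x)\|_2<\infty$; $\underline\sigma>0$ satisfies $\underline\sigma^2\le\mathbb{E}_\gamma\|\nabla L_\gamma(x)\|_2^2$ for all $\|x\|_2=1$. SGD+WD: $x(t+1)=(1-\eta\lambda)x(t)-\eta\nabla L_{\gamma_t}(x(t))$ with $\gamma_t$ i.i.d. $\sim\mathcal D$; $\bar x:=x/\|x\|_2$. $\mathcal E_T$ is the event that for all $0\le t'\le t\le T-1$, $$\Big|\sum_{\tau=t'}^t(1-\eta\lambda)^{4(t-\tau)}\Big(\|\nabla L_{\gamma_\tau}(\bar x(\tau))\|_2^2-\mathbb{E}\big[\|\nabla L_{\gamma_\tau}(\bar x(\tau))\|_2^2\,\big|\,\bar x(\tau)\big]\Big)\Big|\le e^{4\eta\lambda}\frac{M^2}{4}\sqrt{\frac{1}{\lambda\eta}\ln\frac{2T^2}{\delta}}.$$ *)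

theory Defs
  imports "HOL-Probability.Probability"
begin

definition exp_sq_grad :: "'g measure \<Rightarrow> ('g \<Rightarrow> 'a::euclidean_space \<Rightarrow> 'a) \<Rightarrow> 'a \<Rightarrow> real" where
  "exp_sq_grad D grad x = (\<integral>\<gamma>. (norm (grad \<gamma> x))\<^sup>2 \<partial>D)"

definition grad_bound :: "'g measure \<Rightarrow> ('g \<Rightarrow> 'a::euclidean_space \<Rightarrow> 'a) \<Rightarrow> real" where
  "grad_bound D grad = (SUP \<gamma>\<in>space D. SUP x\<in>sphere 0 1. norm (grad \<gamma> x))"

definition event_E :: "'g measure \<Rightarrow> ('g \<Rightarrow> 'a::euclidean_space \<Rightarrow> 'a) \<Rightarrow> real \<Rightarrow> real \<Rightarrow> real \<Rightarrow> nat \<Rightarrow> real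
    \<Rightarrow> (nat \<Rightarrow> 'g) \<Rightarrow> (nat \<Rightarrow> 'a) \<Rightarrow> bool" where
  "event_E D grad \<eta> lam \<delta> T M \<gamma>s x \<longleftrightarrow>
     (\<forall>t' t. t' \<le> t \<and> t \<le> T - 1 \<longrightarrow>
       \<bar>\<Sum>\<tau>=t'..t. (1 - \<eta> * lam) ^ (4 * (t - \<tau>)) *
           ((norm (grad (\<gamma>s \<tau>) (sgn (x \<tau>))))\<^sup>2 - exp_sq_grad D grad (sgn (x \<tau>)))\<bar>
       \<le> exp (4 * \<eta> * lam) * M\<^sup>2 / 4 * sqrt (1 / (lam * \<eta>) * ln (2 * real T ^ 2 / \<delta>)))"

end

theory Submission
  imports Defs
begin

lemma grad_orth:
  fixes f :: "'a::euclidean_space \<Rightarrow> real"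
  assumes d: "\<And>y. y \<noteq> 0 \<Longrightarrow> (f has_derivative (\<lambda>h. g y \<bullet> h)) (at y)"
  and s: "\<And>c y. y \<noteq> 0 \<Longrightarrow> c > 0 \<Longrightarrow> f (c *\<^sub>R y) = f y"
  and y: "y \<noteq> 0"
  shows "g y \<bullet> y = 0"
proof -
  have lin: "((\<lambda>s::real. s *\<^sub>R y) has_derivative (\<lambda>h. h *\<^sub>R y)) (at 1)"
    by (auto intro!: derivative_eq_intros)
  have d1: "((\<lambda>s::real. f (s *\<^sub>R y)) has_derivative (\<lambda>h. g y \<bullet> (h *\<^sub>R y))) (at 1)"
    using diff_chain_at[OF lin, of f "\<lambda>h. g y \<bullet> h"] d[OF y] by (simp add: o_def)
  have d0: "((\<lambda>s::real. f y) has_derivative (\<lambda>h. 0)) (at 1)" by simp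
  have d2: "((\<lambda>s::real. f (s *\<^sub>R y)) has_derivative (\<lambda>h. 0)) (at 1)"
    by (rule has_derivative_transform_within_open[OF d0, of "{0<..}"]) (auto simp: s y)
  have "(\<lambda>h. g y \<bullet> (h *\<^sub>R y)) = (\<lambda>h::real. 0)"
    using has_derivative_unique[OF d1 d2] .
  from fun_cong[OF this, of 1] show ?thesis by simp
qed

lemma grad_scale:
  fixes f :: "'a::euclidean_space \<Rightarrow> real"
  assumes d: "\<And>y. y \<noteq> 0 \<Longrightarrow> (f has_derivative (\<lambda>h. g y \<bullet> h)) (at y)"
  and s: "\<And>c y. y \<noteq> 0 \<Longrightarrow> c > 0 \<Longrightarrow> f (c *\<^sub>R y) = f y"
  and y: "y \<noteq> 0" and c: "c > 0"
  shows "g (c *\<^sub>R y) = (1/c) *\<^sub>R g y"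
proof -
  have lin: "((\<lambda>z. c *\<^sub>R z) has_derivative (\<lambda>h. c *\<^sub>R h)) (at y)"
    by (auto intro!: derivative_eq_intros)
  have cy: "c *\<^sub>R y \<noteq> 0" using y c by simp
  have d1: "((\<lambda>z. f (c *\<^sub>R z)) has_derivative (\<lambda>h. g (c *\<^sub>R y) \<bullet> (c *\<^sub>R h))) (at y)"
    using diff_chain_at[OF lin, of f "\<lambda>h. g (c *\<^sub>R y) \<bullet> h"] d[OF cy] by (simp add: o_def)
  have d2: "((\<lambda>z. f (c *\<^sub>R z)) has_derivative (\<lambda>h. g y \<bullet> h)) (at y)"
    by (rule has_derivative_transform_within_open[OF d[OF y], of "-{0}"]) (auto simp: s c y)
  have e: "(\<lambda>h. g (c *\<^sub>R y) \<bullet> (c *\<^sub>R h)) = (\<lambda>h. g y \<bullet> h)"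
    using has_derivative_unique[OF d1 d2] .
  define u where "u = c *\<^sub>R g (c *\<^sub>R y)"
  have "\<And>h. u \<bullet> h = g y \<bullet> h" using e unfolding u_def
    by (metis inner_scaleR_left inner_scaleR_right)
  hence "(u - g y) \<bullet> (u - g y) = 0" by (simp add: inner_diff_left)
  hence "u = g y" by simp
  hence "(1/c) *\<^sub>R g y = (1/c) *\<^sub>R (c *\<^sub>R g (c *\<^sub>R y))" unfolding u_def by simp
  thus ?thesis using c by simp
qed

theorem mainTheorem14:
  fixes D :: "'g measure"
    and L :: "'g \<Rightarrow> 'a::euclidean_space \<Rightarrow> real"
    and grad :: "'g \<Rightarrow> 'a \<Rightarrow> 'a"
    and \<eta> lam \<delta> \<sigma> :: real and T :: nat
    and \<gamma>s :: "nat \<Rightarrow> 'g" and x :: "nat \<Rightarrow> 'a"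
  assumes D: "prob_space D"
    and diff: "\<And>\<gamma> y. \<gamma> \<in> space D \<Longrightarrow> y \<noteq> 0 \<Longrightarrow> (L \<gamma> has_derivative (\<lambda>h. grad \<gamma> y \<bullet> h)) (at y)"
    and scale: "\<And>\<gamma> c y. \<gamma> \<in> space D \<Longrightarrow> y \<noteq> 0 \<Longrightarrow> c > 0 \<Longrightarrow> L \<gamma> (c *\<^sub>R y) = L \<gamma> y"
    and Mfin: "bdd_above ((\<lambda>(\<gamma>, y). norm (grad \<gamma> y)) ` (space D \<times> sphere 0 1))"
    and sig_pos: "\<sigma> > 0"
    and sig: "\<And>y. norm y = 1 \<Longrightarrow> \<sigma>\<^sup>2 \<le> exp_sq_grad D grad y"
    and eta: "\<eta> > 0" and lam: "lam > 0" and etalam: "\<eta> * lam \<le> 1/2"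
    and T: "T \<ge> 1" and delta: "0 < \<delta>" "\<delta> < 1"
    and ratio: "\<sigma>\<^sup>2 / (grad_bound D grad)\<^sup>2
                  \<ge> 3 * exp (4 * \<eta> * lam) * sqrt (lam * \<eta> * ln (2 * real T ^ 2 / \<delta>))"
    and path: "\<And>t. \<gamma>s t \<in> space D"
    and x0: "x 0 \<noteq> 0"
    and step: "\<And>t. x (Suc t) = (1 - \<eta> * lam) *\<^sub>R x t - \<eta> *\<^sub>R grad (\<gamma>s t) (x t)"
    and event: "event_E D grad \<eta> lam \<delta> T (grad_bound D grad) \<gamma>s x"
  shows "(\<forall>t\<le>T. (norm (x t)) ^ 4 / \<eta>\<^sup>2 \<ge>
            (1 - \<eta> * lam) / (2 * \<eta> * lam) * (1 - exp (- 4 * real t * \<eta> * lam * (1 - \<eta> * lam))) * \<sigma>\<^sup>2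
            - 1/2 * (1 - \<eta> * lam)\<^sup>2 * (grad_bound D grad)\<^sup>2 * exp (4 * \<eta> * lam)
                * sqrt (1 / (lam * \<eta>) * ln (2 * real T ^ 2 / \<delta>)))
       \<and> (\<sigma>\<^sup>2 / (12 * \<eta> * lam) \<ge> (grad_bound D grad)\<^sup>2 / 2 * exp (4 * \<eta> * lam)
                * sqrt (1 / (lam * \<eta>) * ln (2 * real T ^ 2 / \<delta>))
          \<longrightarrow> (\<forall>t. 1 / (\<eta> * lam) \<le> real t \<and> t \<le> T \<longrightarrow>
                 (norm (x t)) ^ 4 / \<eta>\<^sup>2 \<ge> (1 - \<eta> * lam)\<^sup>2 * \<sigma>\<^sup>2 / (4 * \<eta> * lam)))"
proof -
  define a where "a = \<eta> * lam"
  have a0: "0 < a" using eta lam by (simp add: a_def)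
  have a1: "a \<le> 1/2" using etalam by (simp add: a_def)
  define q where "q = (1 - a) ^ 4"
  define G where "G t = (norm (grad (\<gamma>s t) (sgn (x t))))\<^sup>2" for t
  define E where "E t = exp_sq_grad D grad (sgn (x t))" for t
  define M where "M = grad_bound D grad"
  define R where "R = sqrt (1 / (lam * \<eta>) * ln (2 * real T ^ 2 / \<delta>))"
  define B where "B = exp (4 * \<eta> * lam) * M\<^sup>2 / 4 * R"
  define y where "y t = (norm (x t)) ^ 4 / \<eta>\<^sup>2" for t
  have diffg: "\<And>y. y \<noteq> 0 \<Longrightarrow> (L (\<gamma>s t) has_derivative (\<lambda>h. grad (\<gamma>s t) y \<bullet> h)) (at y)" for t
    using diff path by blast
  have scaleg: "\<And>c y. y \<noteq> 0 \<Longrightarrow> c > 0 \<Longrightarrow> L (\<gamma>s t) (c *\<^sub>R y) = L (\<gamma>s t) y" for t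
    using scale path by blast
  have rec: "(norm (x (Suc t)))\<^sup>2 = (1-a)\<^sup>2 * (norm (x t))\<^sup>2 + \<eta>\<^sup>2 * G t / (norm (x t))\<^sup>2"
    if nz: "x t \<noteq> 0" for t
  proof -
    have orth: "grad (\<gamma>s t) (x t) \<bullet> x t = 0"
      by (rule grad_orth[OF diffg scaleg nz])
    have orth': "x t \<bullet> grad (\<gamma>s t) (x t) = 0" using orth by (simp add: inner_commute)
    have sg: "sgn (x t) \<noteq> 0" using nz by (simp add: sgn_zero_iff)
    have xe: "x t = norm (x t) *\<^sub>R sgn (x t)" using nz by (simp add: sgn_div_norm)
    have gs: "grad (\<gamma>s t) (x t) = (1 / norm (x t)) *\<^sub>R grad (\<gamma>s t) (sgn (x t))"
      using grad_scale[OF diffg scaleg sg, of "norm (x t)"] nz xe by simp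
    have gn: "(norm (grad (\<gamma>s t) (x t)))\<^sup>2 = G t / (norm (x t))\<^sup>2"
      unfolding G_def gs by (simp add: power_divide)
    have "(norm (x (Suc t)))\<^sup>2 = (1-a)\<^sup>2 * (norm (x t))\<^sup>2 + \<eta>\<^sup>2 * (norm (grad (\<gamma>s t) (x t)))\<^sup>2"
      unfolding step power2_norm_eq_inner a_def
      by (simp add: inner_diff_left inner_diff_right orth orth' power2_eq_square algebra_simps)
    thus ?thesis using gn by simp
  qed
  have nz: "x t \<noteq> 0" for t
  proof (induction t)
    case 0 then show ?case using x0 .
  next
    case (Suc t)
    have "(1-a)\<^sup>2 * (norm (x t))\<^sup>2 > 0" using a1 Suc by simp
    moreover have "\<eta>\<^sup>2 * G t / (norm (x t))\<^sup>2 \<ge> 0" unfolding G_def by simp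
    ultimately have "(norm (x (Suc t)))\<^sup>2 > 0" using rec[OF Suc] by linarith
    thus ?case by auto
  qed
  have G0: "G t \<ge> 0" for t unfolding G_def by simp
  have ystep: "y (Suc t) \<ge> q * y t + 2 * (1-a)\<^sup>2 * G t" for t
  proof -
    define n where "n = (norm (x t))\<^sup>2"
    have n0: "n > 0" using nz[of t] by (simp add: n_def)
    have "(norm (x (Suc t)))\<^sup>2 = (1-a)\<^sup>2 * n + \<eta>\<^sup>2 * G t / n" using rec[OF nz] n_def by simp
    hence "((norm (x (Suc t)))\<^sup>2)\<^sup>2 = ((1-a)\<^sup>2 * n + \<eta>\<^sup>2 * G t / n)\<^sup>2" by simp
    also have "\<dots> = ((1-a)\<^sup>2 * n)\<^sup>2 + 2 * (1-a)\<^sup>2 * \<eta>\<^sup>2 * G t + (\<eta>\<^sup>2 * G t / n)\<^sup>2"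
      using n0 by (simp add: power2_eq_square field_simps)
    finally have "((norm (x (Suc t)))\<^sup>2)\<^sup>2 = ((1-a)\<^sup>2 * n)\<^sup>2 + 2 * (1-a)\<^sup>2 * \<eta>\<^sup>2 * G t + (\<eta>\<^sup>2 * G t / n)\<^sup>2" .
    hence "((norm (x (Suc t)))\<^sup>2)\<^sup>2 \<ge> ((1-a)\<^sup>2 * n)\<^sup>2 + 2 * (1-a)\<^sup>2 * \<eta>\<^sup>2 * G t"
      by simp
    hence "(norm (x (Suc t)))^4 \<ge> q * (norm (x t))^4 + 2 * (1-a)\<^sup>2 * \<eta>\<^sup>2 * G t"
      unfolding n_def q_def by (simp add: power_mult_distrib flip: power_mult)
    hence "(norm (x (Suc t)))^4 / \<eta>\<^sup>2 \<ge> (q * (norm (x t))^4 + 2 * (1-a)\<^sup>2 * \<eta>\<^sup>2 * G t) / \<eta>\<^sup>2"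
      by (simp add: divide_right_mono)
    also have "(q * (norm (x t))^4 + 2 * (1-a)\<^sup>2 * \<eta>\<^sup>2 * G t) / \<eta>\<^sup>2 = q * y t + 2 * (1-a)\<^sup>2 * G t"
      using eta unfolding y_def by (simp add: field_simps)
    finally show ?thesis unfolding y_def .
  qed
  have q0: "q \<ge> 0" unfolding q_def using a1 by simp
  have y0: "y t \<ge> 0" for t unfolding y_def by simp
  have unroll: "y (Suc s) \<ge> 2 * (1-a)\<^sup>2 * (\<Sum>\<tau>=0..s. q ^ (s - \<tau>) * G \<tau>)" for s
  proof (induction s)
    case 0
    then show ?case using ystep[of 0] q0 y0[of 0] by (simp add: mult_nonneg_nonneg) (smt (verit) mult_nonneg_nonneg)
  next
    case (Suc s)
    have sm: "(\<Sum>\<tau>=0..Suc s. q ^ (Suc s - \<tau>) * G \<tau>) = q * (\<Sum>\<tau>=0..s. q ^ (s - \<tau>) * G \<tau>) + G (Suc s)"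
    proof -
      have "(\<Sum>\<tau>=0..s. q ^ (Suc s - \<tau>) * G \<tau>) = (\<Sum>\<tau>=0..s. q * (q ^ (s - \<tau>) * G \<tau>))"
        by (rule sum.cong) (auto simp: Suc_diff_le)
      thus ?thesis by (simp add: sum_distrib_left)
    qed
    have "q * y (Suc s) \<ge> q * (2 * (1-a)\<^sup>2 * (\<Sum>\<tau>=0..s. q ^ (s - \<tau>) * G \<tau>))"
      using Suc q0 by (simp add: mult_left_mono)
    then show ?case using ystep[of "Suc s"] sm by (simp add: algebra_simps)
  qed
  have q1: "q < 1" unfolding q_def using a0 a1
    using power_strict_mono[of "1-a" 1 4] by simp
  have geo: "(\<Sum>\<tau>=0..s. q ^ (s - \<tau>)) = (1 - q ^ Suc s) / (1 - q)" for s
  proof (induction s)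
    case 0 then show ?case using q1 by simp
  next
    case (Suc s)
    have "(\<Sum>\<tau>=0..Suc s. q ^ (Suc s - \<tau>)) = q * (\<Sum>\<tau>=0..s. q ^ (s - \<tau>)) + 1"
    proof -
      have "(\<Sum>\<tau>=0..s. q ^ (Suc s - \<tau>)) = (\<Sum>\<tau>=0..s. q * q ^ (s - \<tau>))"
        by (rule sum.cong) (auto simp: Suc_diff_le)
      thus ?thesis by (simp add: sum_distrib_left)
    qed
    then show ?case using Suc q1 by (simp add: field_simps)
  qed
  have Rnn: "R \<ge> 0"
  proof -
    have "real T ^ 2 \<ge> 1" using T by simp
    hence "2 * real T ^ 2 / \<delta> > 1" using delta by (simp add: field_simps)
    hence "ln (2 * real T ^ 2 / \<delta>) > 0" by simp
    thus ?thesis unfolding R_def using eta lam by simp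
  qed
  have sumlow: "(\<Sum>\<tau>=0..s. q ^ (s - \<tau>) * G \<tau>) \<ge> \<sigma>\<^sup>2 * ((1 - q ^ Suc s) / (1 - q)) - B"
    if sT: "Suc s \<le> T" for s
  proof -
    have ev: "\<bar>\<Sum>\<tau>=0..s. q ^ (s - \<tau>) * (G \<tau> - E \<tau>)\<bar> \<le> B"
      using event sT unfolding event_E_def B_def M_def R_def q_def G_def E_def a_def
      by (auto simp: power_mult)
    have E1: "E \<tau> \<ge> \<sigma>\<^sup>2" for \<tau> unfolding E_def using sig nz[of \<tau>] by (simp add: norm_sgn)
    have "(\<Sum>\<tau>=0..s. q ^ (s - \<tau>) * \<sigma>\<^sup>2) \<le> (\<Sum>\<tau>=0..s. q ^ (s - \<tau>) * E \<tau>)"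
      by (rule sum_mono) (simp add: E1 q0 mult_left_mono)
    moreover have "(\<Sum>\<tau>=0..s. q ^ (s - \<tau>) * \<sigma>\<^sup>2) = \<sigma>\<^sup>2 * ((1 - q ^ Suc s) / (1 - q))"
      using sum_distrib_right[of "\<lambda>\<tau>. q ^ (s - \<tau>)" "{0..s}" "\<sigma>\<^sup>2", symmetric] geo[of s]
      by (metis mult.commute)
    moreover have "(\<Sum>\<tau>=0..s. q ^ (s - \<tau>) * G \<tau>) = (\<Sum>\<tau>=0..s. q ^ (s - \<tau>) * E \<tau>) + (\<Sum>\<tau>=0..s. q ^ (s - \<tau>) * (G \<tau> - E \<tau>))"
      by (simp add: sum.distrib[symmetric] algebra_simps)
    ultimately show ?thesis using ev by linarith
  qed
  have L1: "(1-a)/(2*a) \<le> 2 * (1-a)\<^sup>2 / (1 - q)"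
  proof -
    have "(1-a) * (1 - q) \<le> 4 * a * (1-a)\<^sup>2"
    proof -
      have e: "4 * a * (1-a)\<^sup>2 - (1-a) * (1 - q) = (1-a) * a * (a * (2 - 4*a + a^2))"
        unfolding q_def by (simp add: power2_eq_square power_def numeral_eq_Suc algebra_simps)
      have "2 - 4*a + a^2 \<ge> 0" using a1 zero_le_power2[of a] by linarith
      hence "(1-a) * a * (a * (2 - 4*a + a^2)) \<ge> 0" using a0 a1 by simp
      thus ?thesis using e by linarith
    qed
    thus ?thesis using a0 q1 by (simp add: field_simps)
  qed
  have L2: "q ^ t \<le> exp (- 4 * real t * a * (1 - a))" for t
  proof -
    have "1 - a \<le> exp (- a)" using exp_ge_add_one_self[of "-a"] by simp
    also have "exp (- a) \<le> exp (- a * (1 - a))" using a0 a1 by (simp add: mult_left_mono)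
    finally have b: "1 - a \<le> exp (- a * (1 - a))" .
    have "q ^ t = (1 - a) ^ (4 * t)" unfolding q_def by (simp add: power_mult)
    also have "\<dots> \<le> exp (- a * (1 - a)) ^ (4 * t)" using b a1 by (intro power_mono) auto
    also have "\<dots> = exp (real (4 * t) * (- a * (1 - a)))" by (rule exp_of_nat_mult[symmetric])
    also have "\<dots> = exp (- 4 * real t * a * (1 - a))" by (simp add: algebra_simps)
    finally show ?thesis .
  qed
  have P1: "y t \<ge> (1-a)/(2*a) * (1 - exp (- 4 * real t * a * (1 - a))) * \<sigma>\<^sup>2 - (1-a)\<^sup>2 * (2*B)"
    if tT: "t \<le> T" for t
  proof (cases t)
    case 0
    have "B \<ge> 0" unfolding B_def using Rnn by simp
    hence h: "(1 - a)\<^sup>2 * (2 * B) \<ge> 0" by (intro mult_nonneg_nonneg) auto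
    have z: "(1-a)/(2*a) * (1 - exp (- 4 * real t * a * (1 - a))) * \<sigma>\<^sup>2 = 0" using 0 by simp
    show ?thesis using h z y0[of t] by linarith
  next
    case (Suc s)
    have u: "y t \<ge> 2 * (1-a)\<^sup>2 * (\<sigma>\<^sup>2 * ((1 - q ^ t) / (1 - q)) - B)"
      using unroll[of s] sumlow[of s] tT Suc a1
      by (smt (verit) mult_left_mono zero_le_power2)
    have m: "(1-a)/(2*a) * (1 - exp (- 4 * real t * a * (1 - a))) \<le> 2 * (1-a)\<^sup>2 / (1 - q) * (1 - q ^ t)"
      apply (rule mult_mono[OF L1])
      using L2[of t] a0 a1 q1 by auto
    have "(1-a)/(2*a) * (1 - exp (- 4 * real t * a * (1 - a))) * \<sigma>\<^sup>2 \<le> 2 * (1-a)\<^sup>2 / (1 - q) * (1 - q ^ t) * \<sigma>\<^sup>2"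
      by (rule mult_right_mono[OF m]) simp
    moreover have "2 * (1-a)\<^sup>2 * (\<sigma>\<^sup>2 * ((1 - q ^ t) / (1 - q)) - B) = 2 * (1-a)\<^sup>2 / (1 - q) * (1 - q ^ t) * \<sigma>\<^sup>2 - (1-a)\<^sup>2 * (2*B)"
      by (simp add: algebra_simps)
    ultimately show ?thesis using u by linarith
  qed
  have part1: "\<forall>t\<le>T. (norm (x t)) ^ 4 / \<eta>\<^sup>2 \<ge>
            (1 - \<eta> * lam) / (2 * \<eta> * lam) * (1 - exp (- 4 * real t * \<eta> * lam * (1 - \<eta> * lam))) * \<sigma>\<^sup>2
            - 1/2 * (1 - \<eta> * lam)\<^sup>2 * (grad_bound D grad)\<^sup>2 * exp (4 * \<eta> * lam)
                * sqrt (1 / (lam * \<eta>) * ln (2 * real T ^ 2 / \<delta>))"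
  proof (intro allI impI)
    fix t assume "t \<le> T"
    from P1[OF this] show "(norm (x t)) ^ 4 / \<eta>\<^sup>2 \<ge>
            (1 - \<eta> * lam) / (2 * \<eta> * lam) * (1 - exp (- 4 * real t * \<eta> * lam * (1 - \<eta> * lam))) * \<sigma>\<^sup>2
            - 1/2 * (1 - \<eta> * lam)\<^sup>2 * (grad_bound D grad)\<^sup>2 * exp (4 * \<eta> * lam)
                * sqrt (1 / (lam * \<eta>) * ln (2 * real T ^ 2 / \<delta>))"
      unfolding y_def a_def B_def M_def R_def by (simp add: mult.assoc)
  qed
  have part2: "\<forall>t. 1 / (\<eta> * lam) \<le> real t \<and> t \<le> T \<longrightarrow>
                 (norm (x t)) ^ 4 / \<eta>\<^sup>2 \<ge> (1 - \<eta> * lam)\<^sup>2 * \<sigma>\<^sup>2 / (4 * \<eta> * lam)"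
    if hyp: "\<sigma>\<^sup>2 / (12 * \<eta> * lam) \<ge> (grad_bound D grad)\<^sup>2 / 2 * exp (4 * \<eta> * lam)
                * sqrt (1 / (lam * \<eta>) * ln (2 * real T ^ 2 / \<delta>))"
  proof (intro allI impI)
    fix t assume ht: "1 / (\<eta> * lam) \<le> real t \<and> t \<le> T"
    have C: "2 * B \<le> \<sigma>\<^sup>2 / (12 * a)"
      using hyp unfolding B_def M_def R_def a_def by (simp add: mult.assoc)
    have ta: "real t * a \<ge> 1" using ht a0 unfolding a_def by (simp add: field_simps)
    have "1 * (1/2) \<le> real t * a * (1 - a)" using ta a1 a0
      by (intro mult_mono) auto
    hence "real t * a * (1 - a) \<ge> 1/2" by simp
    moreover have "- 4 * real t * a * (1 - a) = -4 * (real t * a * (1 - a))" by (simp add: algebra_simps)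
    ultimately have "- 4 * real t * a * (1 - a) \<le> -2" by linarith
    hence "exp (- 4 * real t * a * (1 - a)) \<le> exp (-2)" by (simp only: exp_le_cancel_iff)
    also have "exp (-2::real) \<le> 1/3"
    proof -
      have "3 \<le> exp (2::real)" using exp_ge_add_one_self[of 2] by simp
      thus ?thesis by (simp add: exp_minus field_simps)
    qed
    finally have e3: "exp (- 4 * real t * a * (1 - a)) \<le> 1/3" .
    have s0: "\<sigma>\<^sup>2 \<ge> 0" by simp
    have "(1-a)/(2*a) * (2/3) * \<sigma>\<^sup>2 \<le> (1-a)/(2*a) * (1 - exp (- 4 * real t * a * (1 - a))) * \<sigma>\<^sup>2"
      using e3 a0 a1 s0 by (intro mult_right_mono mult_left_mono) auto
    moreover have "(1-a)\<^sup>2 * (2*B) \<le> (1-a)\<^sup>2 * (\<sigma>\<^sup>2 / (12 * a))"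
      by (rule mult_left_mono[OF C]) simp
    moreover have "(1-a)\<^sup>2 * \<sigma>\<^sup>2 / (4 * a) \<le> (1-a)/(2*a) * (2/3) * \<sigma>\<^sup>2 - (1-a)\<^sup>2 * (\<sigma>\<^sup>2 / (12 * a))"
    proof -
      have "(1-a)/(2*a) * (2/3) * \<sigma>\<^sup>2 - (1-a)\<^sup>2 * (\<sigma>\<^sup>2 / (12 * a)) - (1-a)\<^sup>2 * \<sigma>\<^sup>2 / (4 * a)
          = (1-a) * a * \<sigma>\<^sup>2 / (3 * a)"
        using a0 by (simp add: field_simps power2_eq_square)
      moreover have "(1-a) * a * \<sigma>\<^sup>2 / (3 * a) \<ge> 0" using a0 a1 by simp
      ultimately show ?thesis by linarith
    qed
    ultimately have "y t \<ge> (1-a)\<^sup>2 * \<sigma>\<^sup>2 / (4 * a)" using P1[of t] ht by linarith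
    thus "(norm (x t)) ^ 4 / \<eta>\<^sup>2 \<ge> (1 - \<eta> * lam)\<^sup>2 * \<sigma>\<^sup>2 / (4 * \<eta> * lam)"
      unfolding y_def a_def by (simp add: mult.assoc)
  qed
  show ?thesis using part1 part2 by blast
qed

end
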